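(* Let $Y$ be a regular space, let $X\subseteq Y$ be such that $\psi(X)<\mathfrak b$, and let $(S,\mathcal S)$ be an $\alpha$-scaffold in $X$. Then there exists $S'\le_{\mathcal S}S$ that is closed in $X$.
   Context: $\mathfrak b$ is the least cardinality of an unbounded family in $\omega^\omega$. For a space $Z$ and $z\in Z$, $\psi(Z,z)$ is the least cardinality of a family $\mathcal U$ of open neighbourhoods of $z$ with $\bigcap\mathcal U=\{z\}$, and $\psi(Z)=\sup_{z\in Z}\psi(Z,z)$. Scaffolds in a space $X$ are defined by recursion. A pair $(S,\mathcal S)$ with $S\subseteq X$, $\mathcal S\subseteq 2^S$ is: (S.0) a $0$-scaffold if $S=\{x\}$, $\mathcal S=\{S\}$; then $\mathrm{ht}(S)=\mathrm{ht}_S(x)=0$ and $\mathrm{cor}\,S=x$. (S.1) an $\alpha$-scaffold if there are $x\in S$, pairwise disjoint open sets $U_n\subseteq X$, and $\alpha_n$-scaffolds $(S_n,\mathcal S_n)$ $(n\in\omega)$ with $(\alpha_n)$ nondecreasing, $\alpha=\min\{\beta:\beta>\alpha_n\text{ for all }n\}$, $\mathrm{cor}\,S_n\to x$, $\overline{S_n}\subseteq U_n$, $x\notin\overline{U_n}$, $S=\{x\}\cup\bigcup_nS_n$, $\mathcal S=\{S\}\cup\bigcup_n\mathcal S_n$; then $\mathrm{ht}(S)=\mathrm{ht}_S(x)=\alpha$, $\mathrm{ht}_S(x')=\mathrm{ht}_{S_n}(x')$ for $x'\in S_n$, and $\mathrm{cor}\,S=x$. $\mathcal S$ is a stratification of $S$.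 For $S''\in\mathcal S$ let $\mathcal S|_{S''}=\{T\in\mathcal S:T\subseteq S''\}$; $\mathcal S^-$ is the set of $\subseteq$-maximal elements of $\mathcal S\setminus\{S\}$. Recursively, for $S'\subseteq S$, $S'\le_{\mathcal S}S$ means $\mathrm{cor}\,S'=\mathrm{cor}\,S$ and there is a stratification $\mathcal S'$ of $S'$ such that $\mathcal S'^-\neq\emptyset$ whenever $\mathcal S^-\neq\emptyset$, and each $\beta$-scaffold $B'\in\mathcal S'^-$ satisfies $B'\le_{\mathcal S|_B}B$ for some $\beta$-scaffold $B\in\mathcal S^-$. *)

theory Defs
  imports "HOL-Analysis.Analysis" "HOL-Library.Equipollence"
begin

definition unbounded_family :: "(nat \<Rightarrow> nat) set \<Rightarrow> bool" where
  "unbounded_family F \<longleftrightarrow> \<not> (\<exists>g. \<forall>f\<in>F. \<forall>\<^sub>F n in sequentially. f n \<le> g n)"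

text \<open>|K| < b, i.e. every family of cardinality at most |K| is bounded
  (b being the least cardinality of an unbounded family).\<close>
definition card_below_b :: "'b set \<Rightarrow> bool" where
  "card_below_b K \<longleftrightarrow> (\<forall>F :: (nat \<Rightarrow> nat) set. F \<lesssim> K \<longrightarrow> \<not> unbounded_family F)"

text \<open>psi(X) < b: there is a cardinal |K| < b such that psi(X,z) \<le> |K| for all z,
  i.e. every point z has a family of at most |K| open neighbourhoods whose
  intersection (inside the space) is {z}.\<close>
definition psi_below_b :: "'a topology \<Rightarrow> bool" where
  "psi_below_b X \<longleftrightarrow> (\<exists>K :: 'a set set. card_below_b K \<and>
     (\<forall>z\<in>topspace X. \<exists>\<U>. \<U> \<lesssim> K \<and> (\<forall>U\<in>\<U>. openin X U \<and> z \<in> U)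
                          \<and> topspace X \<inter> \<Inter>\<U> = {z}))"

text \<open>scaffold T \<alpha> x S SS: (S, SS) is an \<alpha>-scaffold in the space T with core x.
  Heights live in an arbitrary well-ordered type 'o (standing for the ordinals).\<close>
inductive scaffold :: "'a topology \<Rightarrow> 'o::wellorder \<Rightarrow> 'a \<Rightarrow> 'a set \<Rightarrow> 'a set set \<Rightarrow> bool"
  for T :: "'a topology" where
  zero: "\<lbrakk>\<forall>\<beta>. \<alpha> \<le> \<beta>; x \<in> topspace T\<rbrakk> \<Longrightarrow> scaffold T \<alpha> x {x} {{x}}"
| step: "\<lbrakk>x \<in> topspace T;
          \<forall>n. openin T (U n);
          \<forall>m n. m \<noteq> n \<longrightarrow> U m \<inter> U n = {};
          mono a;
          \<forall>n. a n < \<alpha>;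
          \<forall>\<beta>. (\<forall>n. a n < \<beta>) \<longrightarrow> \<alpha> \<le> \<beta>;
          \<forall>n. scaffold T (a n) (c n) (Sn n) (SSn n);
          limitin T c x sequentially;
          \<forall>n. T closure_of (Sn n) \<subseteq> U n;
          \<forall>n. x \<notin> T closure_of (U n);
          S = insert x (\<Union>n. Sn n);
          SS = insert S (\<Union>n. SSn n)\<rbrakk>
        \<Longrightarrow> scaffold T \<alpha> x S SS"

definition strat_restr :: "'a set set \<Rightarrow> 'a set \<Rightarrow> 'a set set" where
  "strat_restr SS B = {A \<in> SS. A \<subseteq> B}"

definition strat_minus :: "'a set set \<Rightarrow> 'a set \<Rightarrow> 'a set set" where
  "strat_minus SS S = {A \<in> SS - {S}. \<forall>B \<in> SS - {S}. A \<subseteq> B \<longrightarrow> A = B}"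

inductive scaffold_le :: "'a topology \<Rightarrow> 'o::wellorder itself \<Rightarrow> 'a set \<Rightarrow> 'a set \<Rightarrow> 'a set set \<Rightarrow> bool"
  for T :: "'a topology" and Ot :: "'o itself" where
  "\<lbrakk>S' \<subseteq> S;
    scaffold T (\<alpha>::'o) x S SS;
    scaffold T (\<alpha>'::'o) x S' SS';
    strat_minus SS S \<noteq> {} \<longrightarrow> strat_minus SS' S' \<noteq> {};
    \<forall>B' \<in> strat_minus SS' S'. \<forall>(\<beta>::'o) y'. scaffold T \<beta> y' B' (strat_restr SS' B') \<longrightarrow>
       (\<exists>B \<in> strat_minus SS S. \<exists>y. scaffold T \<beta> y B (strat_restr SS B)
            \<and> scaffold_le T Ot B' B (strat_restr SS B))\<rbrakk>
   \<Longrightarrow> scaffold_le T Ot S' S SS"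

end

theory Submission
  imports Defs
begin

lemma scaffold_basic:
  assumes "scaffold T \<alpha> x S SS"
  shows "x \<in> S \<and> S \<subseteq> topspace T \<and> S \<in> SS \<and> (\<forall>A\<in>SS. A \<subseteq> S \<and> A \<noteq> {})"
  using assms
proof (induction rule: scaffold.induct)
  case (zero \<alpha> x)
  then show ?case by auto
next
  case (step x U a \<alpha> c Sn SSn S SS)
  have "\<Union>(range Sn) \<subseteq> topspace T" using step.IH by blast
  moreover have "\<forall>A\<in>\<Union>(range SSn). A \<subseteq> S \<and> A \<noteq> {}"
  proof
    fix A assume "A \<in> \<Union>(range SSn)"
    then obtain n where "A \<in> SSn n" by blast
    then show "A \<subseteq> S \<and> A \<noteq> {}" using step.IH[rule_format, of n] step.hyps(10) by blast
  qed
  ultimately show ?case using step.hyps(1,10,11) by blast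
qed

lemma step_facts:
  assumes sc: "\<forall>n. scaffold T (a n) (c n) (Sn n) (SSn n)"
    and sub: "\<forall>n. Sn n \<subseteq> U n"
    and disj: "\<forall>m n. m \<noteq> n \<longrightarrow> U m \<inter> U n = {}"
    and xU: "\<forall>n. x \<notin> U n"
    and S: "S = insert x (\<Union>(range Sn))"
    and SS: "SS = insert S (\<Union>(range SSn))"
  shows "strat_minus SS S = range Sn" "strat_restr SS (Sn n) = SSn n"
proof -
  have B: "Sn m \<in> SSn m \<and> (\<forall>A\<in>SSn m. A \<subseteq> Sn m \<and> A \<noteq> {})" for m
    using scaffold_basic[OF sc[rule_format, of m]] by blast
  have D: "\<And>A n k. A \<subseteq> Sn n \<Longrightarrow> A \<subseteq> Sn k \<Longrightarrow> A \<noteq> {} \<Longrightarrow> n = k"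
    using sub disj by blast
  have NS: "\<And>A n. A \<in> SSn n \<Longrightarrow> A \<noteq> S"
    using B sub xU S by blast
  have SSm: "SS - {S} = \<Union>(range SSn)"
    using NS SS by blast
  show "strat_minus SS S = range Sn"
  proof
    show "strat_minus SS S \<subseteq> range Sn"
    proof
      fix A assume A: "A \<in> strat_minus SS S"
      then have "A \<in> SS - {S}" and M: "\<forall>B \<in> SS - {S}. A \<subseteq> B \<longrightarrow> A = B"
        unfolding strat_minus_def by auto
      then obtain n where "A \<in> SSn n" using SSm by auto
      then have "A \<subseteq> Sn n" using B by blast
      moreover have "Sn n \<in> \<Union>(range SSn)" using B[of n] by blast
      then have "Sn n \<in> SS - {S}" using SSm by simp
      ultimately have "A = Sn n" using M by blast
      then show "A \<in> range Sn" by blast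
    qed
    show "range Sn \<subseteq> strat_minus SS S"
    proof
      fix A assume "A \<in> range Sn"
      then obtain n where An: "A = Sn n" by blast
      have "A \<in> \<Union>(range SSn)" using B[of n] An by blast
      then have "A \<in> SS - {S}" using SSm by simp
      moreover have "\<forall>C \<in> SS - {S}. A \<subseteq> C \<longrightarrow> A = C"
      proof (intro ballI impI)
        fix C assume "C \<in> SS - {S}" "A \<subseteq> C"
        then obtain k where Ck: "C \<in> SSn k" using SSm by auto
        then have "C \<subseteq> Sn k" using B by blast
        moreover have "A \<noteq> {}" using An B by blast
        ultimately have "n = k" using D[of A n k] An \<open>A \<subseteq> C\<close> by blast
        then show "A = C" using \<open>C \<subseteq> Sn k\<close> \<open>A \<subseteq> C\<close> An by blast
      qed
      ultimately show "A \<in> strat_minus SS S" unfolding strat_minus_def by blast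
    qed
  qed
  show "strat_restr SS (Sn n) = SSn n"
  proof
    show "strat_restr SS (Sn n) \<subseteq> SSn n"
    proof
      fix A assume "A \<in> strat_restr SS (Sn n)"
      then have A: "A \<in> SS" "A \<subseteq> Sn n" unfolding strat_restr_def by auto
      have "A \<noteq> S" using A sub xU S by blast
      then obtain k where "A \<in> SSn k" using A SS by auto
      moreover then have "A \<subseteq> Sn k" "A \<noteq> {}" using B by auto
      ultimately show "A \<in> SSn n" using D[of A n k] A by blast
    qed
    show "SSn n \<subseteq> strat_restr SS (Sn n)"
      using B SS unfolding strat_restr_def by blast
  qed
qed

lemma step_sub:
  assumes "\<forall>n. scaffold T (a n) (c n) (Sn n) (SSn n)"
    and "\<forall>n. openin T (U n)"
    and "\<forall>n. T closure_of Sn n \<subseteq> U n"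
    and "\<forall>n. x \<notin> T closure_of U n"
  shows "\<forall>n. Sn n \<subseteq> U n" "\<forall>n. x \<notin> U n"
proof -
  show "\<forall>n. Sn n \<subseteq> U n"
  proof
    fix n
    have "Sn n \<subseteq> topspace T" using scaffold_basic[OF assms(1)[rule_format, of n]] by blast
    then have "Sn n \<subseteq> T closure_of Sn n" by (rule closure_of_subset)
    then show "Sn n \<subseteq> U n" using assms(3) by blast
  qed
  show "\<forall>n. x \<notin> U n"
  proof
    fix n
    have "U n \<subseteq> T closure_of U n" using closure_of_subset openin_subset assms(2) by metis
    then show "x \<notin> U n" using assms(4) by blast
  qed
qed

lemma height_unique:
  assumes "scaffold T \<alpha> x S SS"
  shows "scaffold T \<beta> y S SS \<Longrightarrow> \<alpha> = \<beta>"
  using assms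
proof (induction arbitrary: \<beta> y rule: scaffold.induct)
  case (zero \<alpha> x)
  from zero.prems show ?case
  proof (cases rule: scaffold.cases)
    case (zero)
    have "\<alpha> \<le> \<beta>" using \<open>\<forall>\<beta>. \<alpha> \<le> \<beta>\<close> by blast
    moreover have "\<beta> \<le> \<alpha>" using zero by blast
    ultimately show ?thesis by (rule antisym)
  next
    case (step U a c Sn SSn)
    note sb = step_sub[OF step(7) step(2) step(9) step(10)]
    have "c 0 \<in> Sn 0" using scaffold_basic[OF step(7)[rule_format, of 0]] by blast
    then have "c 0 \<in> {x}" using step(11) by blast
    moreover have "y \<in> {x}" using step(11) by blast
    ultimately show ?thesis using sb \<open>c 0 \<in> Sn 0\<close> by blast
  qed
next
  case (step x U a \<alpha> c Sn SSn S SS)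
  note H = step.hyps
  have scs: "\<forall>n. scaffold T (a n) (c n) (Sn n) (SSn n)" using step.IH by blast
  have IH: "\<And>n \<beta> y. scaffold T \<beta> y (Sn n) (SSn n) \<Longrightarrow> a n = \<beta>" using step.IH by blast
  note sb = step_sub[OF scs H(2) H(8) H(9)]
  note sf = step_facts[OF scs sb(1) H(3) sb(2) H(10) H(11)]
  from step.prems show ?case
  proof (cases rule: scaffold.cases)
    case (zero)
    have "c 0 \<in> Sn 0" using scaffold_basic[OF scs[rule_format, of 0]] by blast
    then show ?thesis using zero H(10) sb by blast
  next
    case (step U' a' c' Sn' SSn')
    note sb' = step_sub[OF step(7) step(2) step(9) step(10)]
    note sf' = step_facts[OF step(7) sb'(1) step(3) sb'(2) step(11) step(12)]
    have h1: "\<forall>n. \<exists>k. a n = a' k"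
    proof
      fix n
      have "Sn n \<in> range Sn'" by (metis rangeI sf(1) sf'(1))
      then obtain k where k: "Sn n = Sn' k" by blast
      then have "SSn n = SSn' k" using sf(2)[of n] sf'(2)[of k] by simp
      then have "scaffold T (a' k) (c' k) (Sn n) (SSn n)" using step(7)[rule_format, of k] k by metis
      then have "a n = a' k" by (rule IH)
      then show "\<exists>k. a n = a' k" by blast
    qed
    have h2: "\<forall>k. \<exists>n. a' k = a n"
    proof
      fix k
      have "Sn' k \<in> range Sn" by (metis rangeI sf(1) sf'(1))
      then obtain n where n: "Sn' k = Sn n" by blast
      then have "SSn' k = SSn n" using sf(2)[of n] sf'(2)[of k] by simp
      then have "scaffold T (a' k) (c' k) (Sn n) (SSn n)" using step(7)[rule_format, of k] n by metis
      then have "a n = a' k" by (rule IH)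
      then show "\<exists>n. a' k = a n" by metis
    qed
    have "\<forall>n. a n < \<beta>"
    proof
      fix n obtain k where "a n = a' k" using h1 by blast
      then show "a n < \<beta>" using step(5) by simp
    qed
    then have "\<alpha> \<le> \<beta>" using H(6) by blast
    moreover have "\<forall>k. a' k < \<alpha>"
    proof
      fix k obtain n where "a' k = a n" using h2 by blast
      then show "a' k < \<alpha>" using H(5) by simp
    qed
    then have "\<beta> \<le> \<alpha>" using step(6) by blast
    ultimately show ?thesis by simp
  qed
qed

lemma cbb_empty: "card_below_b {}"
  unfolding card_below_b_def unbounded_family_def by auto

lemma cbb_lepoll: "A \<lesssim> B \<Longrightarrow> card_below_b B \<Longrightarrow> card_below_b A"
  unfolding card_below_b_def using lepoll_trans by blast

lemma cbb_subset: "A \<subseteq> B \<Longrightarrow> card_below_b B \<Longrightarrow> card_below_b A"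
  using cbb_lepoll subset_imp_lepoll by blast

lemma cbb_Un:
  assumes A: "card_below_b A" and B: "card_below_b B"
  shows "card_below_b (A \<union> B)"
  unfolding card_below_b_def
proof (intro allI impI)
  fix F :: "(nat \<Rightarrow> nat) set"
  assume "F \<lesssim> A \<union> B"
  then obtain h where h: "inj_on h F" "h ` F \<subseteq> A \<union> B" unfolding lepoll_def by blast
  define F1 where "F1 = {f\<in>F. h f \<in> A}"
  define F2 where "F2 = {f\<in>F. h f \<notin> A}"
  have "F1 \<lesssim> A" unfolding lepoll_def F1_def
    by (rule exI[of _ h]) (use h in \<open>auto simp: inj_on_def\<close>)
  then obtain g1 where g1: "\<forall>f\<in>F1. \<forall>\<^sub>F n in sequentially. f n \<le> g1 n"
    using A unfolding card_below_b_def unbounded_family_def by blast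
  have "F2 \<lesssim> B" unfolding lepoll_def F2_def
    by (rule exI[of _ h]) (use h in \<open>auto simp: inj_on_def\<close>)
  then obtain g2 where g2: "\<forall>f\<in>F2. \<forall>\<^sub>F n in sequentially. f n \<le> g2 n"
    using B unfolding card_below_b_def unbounded_family_def by blast
  have "\<forall>f\<in>F. \<forall>\<^sub>F n in sequentially. f n \<le> max (g1 n) (g2 n)"
  proof
    fix f assume f: "f \<in> F"
    show "\<forall>\<^sub>F n in sequentially. f n \<le> max (g1 n) (g2 n)"
    proof (cases "h f \<in> A")
      case True
      then have "f \<in> F1" using f F1_def by blast
      then have "\<forall>\<^sub>F n in sequentially. f n \<le> g1 n" using g1 by blast
      then show ?thesis by (rule eventually_mono) auto
    next
      case False
      then have "f \<in> F2" using f F2_def by blast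
      then have "\<forall>\<^sub>F n in sequentially. f n \<le> g2 n" using g2 by blast
      then show ?thesis by (rule eventually_mono) auto
    qed
  qed
  then have "\<exists>g. \<forall>f\<in>F. \<forall>\<^sub>F n in sequentially. f n \<le> g n" by (rule exI[of _ "\<lambda>n. max (g1 n) (g2 n)"])
  then show "\<not> unbounded_family F" unfolding unbounded_family_def by blast
qed

lemma cbb_bound:
  assumes "card_below_b A"
  shows "\<exists>g. \<forall>a\<in>A. \<forall>\<^sub>F n in sequentially. (\<phi> a :: nat \<Rightarrow> nat) n \<le> g n"
proof -
  have "\<phi> ` A \<lesssim> A" by (rule image_lepoll)
  then obtain g where "\<forall>f\<in>\<phi> ` A. \<forall>\<^sub>F n in sequentially. f n \<le> g n"
    using assms unfolding card_below_b_def unbounded_family_def by blast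
  then show ?thesis by blast
qed

lemma scaffold_le_sub: "scaffold_le T Ot S' S SS \<Longrightarrow> S' \<subseteq> S"
  by (erule scaffold_le.cases) (simp only:)

lemma reg_shrink:
  assumes reg: "regular_space T" and V: "openin T V" "x \<in> V"
  shows "\<exists>W. openin T W \<and> x \<in> W \<and> T closure_of W \<subseteq> V"
proof -
  have c1: "closedin T (topspace T - V)" using V(1) by (simp add: closedin_diff)
  have c2: "x \<in> topspace T - (topspace T - V)" using V openin_subset by blast
  have "\<exists>W. openin T W \<and> x \<in> W \<and> disjnt (topspace T - V) (T closure_of W)"
    using reg c1 c2 unfolding regular_space by blast
  then obtain W where W: "openin T W" "x \<in> W" "disjnt (topspace T - V) (T closure_of W)"
    by blast
  have "T closure_of W \<subseteq> V" using W(3) closure_of_subset_topspace[of T W] unfolding disjnt_def by blast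
  then show ?thesis using W by blast
qed

lemma psi_t1:
  fixes T :: "'a topology" assumes psi: "psi_below_b T" shows "t1_space T"
proof -
  obtain K :: "'a set set" where K: "card_below_b K"
    and KU: "\<forall>z\<in>topspace T. \<exists>\<U>. \<U> \<lesssim> K \<and> (\<forall>U\<in>\<U>. openin T U \<and> z \<in> U)
                          \<and> topspace T \<inter> \<Inter>\<U> = {z}"
    using psi unfolding psi_below_b_def by (elim exE conjE) (rule that)
  show "t1_space T"
    unfolding t1_space_def
  proof (intro ballI impI)
    fix z y assume z: "z \<in> topspace T" and y: "y \<in> topspace T" and zy: "z \<noteq> y"
    obtain \<U> where U: "\<forall>U\<in>\<U>. openin T U \<and> z \<in> U" "topspace T \<inter> \<Inter>\<U> = {z}"
      using KU[rule_format, OF z] by (elim exE conjE) (rule that; assumption)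
    have "y \<notin> \<Inter>\<U>"
    proof
      assume "y \<in> \<Inter>\<U>"
      then have "y \<in> topspace T \<inter> \<Inter>\<U>" using y by simp
      then show False using U(2) zy by simp
    qed
    then obtain U where "U \<in> \<U>" "y \<notin> U" by blast
    then show "\<exists>U. openin T U \<and> z \<in> U \<and> y \<notin> U" using U by blast
  qed
qed


definition GOOD :: "'a topology \<Rightarrow> 'o::wellorder itself \<Rightarrow> 'o \<Rightarrow> 'a \<Rightarrow> 'a set \<Rightarrow> 'a set set \<Rightarrow> bool" where
  "GOOD T Ot \<alpha> x S SS \<longleftrightarrow> (\<forall>\<G> :: 'a set set. card_below_b \<G> \<and> (\<forall>G\<in>\<G>. openin T G \<and> x \<in> G) \<longrightarrow>
     (\<exists>R RS. (\<forall>m::nat. scaffold T \<alpha> x (R m) (RS m) \<and> scaffold_le T Ot (R m) S SS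
                  \<and> closedin T (R m))
          \<and> (\<forall>m m'. m \<le> m' \<longrightarrow> R m' \<subseteq> R m) \<and> (\<forall>G\<in>\<G>. \<exists>m. R m \<subseteq> G)))"

lemma main_step:
  fixes T :: "'a topology" and \<alpha> :: "'o::wellorder" and K :: "'a set set"
  assumes reg: "regular_space T" and K: "card_below_b K"
    and KU: "\<forall>z\<in>topspace T. \<exists>\<U>. \<U> \<lesssim> K \<and> (\<forall>U\<in>\<U>. openin T U \<and> z \<in> U)
                          \<and> topspace T \<inter> \<Inter>\<U> = {z}"
    and H1: "x \<in> topspace T" and H2: "\<forall>n. openin T (U n)"
    and H3: "\<forall>m n. m \<noteq> n \<longrightarrow> U m \<inter> U n = {}" and H4: "incseq a"
    and H5: "\<forall>n. a n < \<alpha>" and H6: "\<forall>\<beta>. (\<forall>n. a n < \<beta>) \<longrightarrow> \<alpha> \<le> \<beta>"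
    and scs: "\<forall>n. scaffold T (a n) (c n) (Sn n) (SSn n)"
    and H7: "limitin T c x sequentially"
    and H8: "\<forall>n. T closure_of Sn n \<subseteq> U n" and H9: "\<forall>n. x \<notin> T closure_of U n"
    and H10: "S = insert x (\<Union>(range Sn))" and H11: "SS = insert S (\<Union>(range SSn))"
    and IH: "\<forall>n. GOOD T TYPE('o) (a n) (c n) (Sn n) (SSn n)"
  shows "GOOD T TYPE('o) \<alpha> x S SS"
  unfolding GOOD_def
proof (intro allI impI)
  have sb: "\<forall>n. Sn n \<subseteq> U n" "\<forall>n. x \<notin> U n"
    using step_sub[OF scs H2 H8 H9] by auto
  note sf = step_facts[OF scs sb(1) H3 sb(2) H10 H11]
  have scS: "scaffold T \<alpha> x S SS"
    by (rule scaffold.step[OF H1 H2 H3 H4 H5 H6 scs H7 H8 H9 H10 H11])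
  fix \<G> :: "'a set set"
  assume G: "card_below_b \<G> \<and> (\<forall>G\<in>\<G>. openin T G \<and> x \<in> G)"
  obtain \<U> where U1: "\<U> \<lesssim> K" and U2: "\<forall>V\<in>\<U>. openin T V \<and> x \<in> V"
    and U3: "topspace T \<inter> \<Inter>\<U> = {x}"
    using KU[rule_format, OF H1] by (elim exE conjE) (rule that; assumption)
  have "\<forall>V\<in>\<U>. \<exists>W. openin T W \<and> x \<in> W \<and> T closure_of W \<subseteq> V"
    using reg_shrink[OF reg] U2 by blast
  then obtain sh where sh: "\<forall>V\<in>\<U>. openin T (sh V) \<and> x \<in> sh V \<and> T closure_of (sh V) \<subseteq> V"
    by metis
  define \<H> where "\<H> = \<G> \<union> sh ` \<U>"
  have cU: "card_below_b \<U>" by (rule cbb_lepoll[OF U1 K])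
  have cH: "card_below_b \<H>"
    unfolding \<H>_def
  proof (rule cbb_Un)
    show "card_below_b \<G>" using G by blast
    show "card_below_b (sh ` \<U>)" by (rule cbb_lepoll[OF image_lepoll cU])
  qed
  have oH: "\<forall>H\<in>\<H>. openin T H \<and> x \<in> H" using G sh unfolding \<H>_def by blast
  have "\<forall>n. \<exists>R RS. (\<forall>m::nat. scaffold T (a n) (c n) (R m) (RS m) \<and> scaffold_le T TYPE('o) (R m) (Sn n) (SSn n)
                  \<and> closedin T (R m))
          \<and> (\<forall>m m'. m \<le> m' \<longrightarrow> R m' \<subseteq> R m) \<and> (\<forall>G\<in>{H\<in>\<H>. c n \<in> H}. \<exists>m. R m \<subseteq> G)"
  proof
    fix n
    have c1: "card_below_b {H\<in>\<H>. c n \<in> H}" by (rule cbb_subset[OF _ cH]) blast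
    have c2: "\<forall>G\<in>{H\<in>\<H>. c n \<in> H}. openin T G \<and> c n \<in> G" using oH by blast
    show "\<exists>R RS. (\<forall>m::nat. scaffold T (a n) (c n) (R m) (RS m) \<and> scaffold_le T TYPE('o) (R m) (Sn n) (SSn n)
                  \<and> closedin T (R m))
          \<and> (\<forall>m m'. m \<le> m' \<longrightarrow> R m' \<subseteq> R m) \<and> (\<forall>G\<in>{H\<in>\<H>. c n \<in> H}. \<exists>m. R m \<subseteq> G)"
      using IH[rule_format, of n, unfolded GOOD_def, THEN spec, of "{H\<in>\<H>. c n \<in> H}", THEN mp, OF conjI[OF c1 c2]] .
  qed
  then obtain Rn where "\<forall>n. \<exists>RS. (\<forall>m::nat. scaffold T (a n) (c n) (Rn n m) (RS m) \<and> scaffold_le T TYPE('o) (Rn n m) (Sn n) (SSn n)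
                  \<and> closedin T (Rn n m))
          \<and> (\<forall>m m'. m \<le> m' \<longrightarrow> Rn n m' \<subseteq> Rn n m) \<and> (\<forall>G\<in>{H\<in>\<H>. c n \<in> H}. \<exists>m. Rn n m \<subseteq> G)"
    by (rule choice[THEN exE])
  then obtain RSn where Rn: "\<forall>n. (\<forall>m::nat. scaffold T (a n) (c n) (Rn n m) (RSn n m) \<and> scaffold_le T TYPE('o) (Rn n m) (Sn n) (SSn n)
                  \<and> closedin T (Rn n m))
          \<and> (\<forall>m m'. m \<le> m' \<longrightarrow> Rn n m' \<subseteq> Rn n m) \<and> (\<forall>G\<in>{H\<in>\<H>. c n \<in> H}. \<exists>m. Rn n m \<subseteq> G)"
    by (rule choice[THEN exE])
  define f where "f H n = (if c n \<in> H then LEAST m. Rn n m \<subseteq> H else 0)" for H n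
  obtain g where g: "\<forall>H\<in>\<H>. \<forall>\<^sub>F n in sequentially. f H n \<le> g n"
    using cbb_bound[OF cH, of f] by blast
  define P where "P n = Rn n (g n)" for n
  define PS where "PS n = RSn n (g n)" for n
  have Psc: "scaffold T (a n) (c n) (P n) (PS n)" for n using Rn unfolding P_def PS_def by blast
  have Ple: "scaffold_le T TYPE('o) (P n) (Sn n) (SSn n)" for n using Rn unfolding P_def by blast
  have Pcl: "closedin T (P n)" for n using Rn unfolding P_def by blast
  have PS: "P n \<subseteq> Sn n" for n using scaffold_le_sub[OF Ple] .
  have key: "\<exists>N. \<forall>n\<ge>N. P n \<subseteq> H" if HH: "H \<in> \<H>" for H
  proof -
    have "openin T H" "x \<in> H" using oH HH by auto
    then have "\<forall>\<^sub>F n in sequentially. c n \<in> H"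
      using H7 unfolding limitin_def by blast
    moreover have "\<forall>\<^sub>F n in sequentially. f H n \<le> g n" using g HH by blast
    ultimately have "\<forall>\<^sub>F n in sequentially. c n \<in> H \<and> f H n \<le> g n"
      by (rule eventually_conj)
    then obtain N where N: "\<forall>n\<ge>N. c n \<in> H \<and> f H n \<le> g n"
      unfolding eventually_sequentially by blast
    have "P n \<subseteq> H" if n: "n \<ge> N" for n
    proof -
      have cn: "c n \<in> H" and fg: "f H n \<le> g n" using N n by auto
      have "H \<in> {H\<in>\<H>. c n \<in> H}" using HH cn by blast
      then have "\<exists>m. Rn n m \<subseteq> H" using Rn by blast
      then have "Rn n (LEAST m. Rn n m \<subseteq> H) \<subseteq> H" by (rule LeastI_ex)
      then have "Rn n (f H n) \<subseteq> H" unfolding f_def using cn by simp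
      moreover have "Rn n (g n) \<subseteq> Rn n (f H n)" using Rn fg by blast
      ultimately show ?thesis unfolding P_def by blast
    qed
    then show ?thesis by blast
  qed
  define R where "R m = insert x (\<Union>k. P (k + m))" for m
  define RS where "RS m = insert (R m) (\<Union>k. PS (k + m))" for m
  have Psc': "\<forall>k. scaffold T (a (k+m)) (c (k+m)) (P (k+m)) (PS (k+m))" for m
    using Psc by simp
  have sbm: "\<forall>k. P (k+m) \<subseteq> U (k+m)" for m using PS sb(1) by blast
  have sbm2: "\<forall>k. x \<notin> U (k+m)" for m using sb(2) by simp
  have dm: "\<forall>k k'. k \<noteq> k' \<longrightarrow> U (k+m) \<inter> U (k'+m) = {}" for m using H3 by simp
  have Req: "R m = insert x (\<Union>(range (\<lambda>k. P (k+m))))" for m unfolding R_def by simp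
  have RSeq: "RS m = insert (R m) (\<Union>(range (\<lambda>k. PS (k+m))))" for m unfolding RS_def by simp
  have Rsc: "scaffold T \<alpha> x (R m) (RS m)" for m
  proof (rule scaffold.step[where U="\<lambda>k. U (k+m)" and a="\<lambda>k. a (k+m)" and c="\<lambda>k. c (k+m)"
        and Sn="\<lambda>k. P (k+m)" and SSn="\<lambda>k. PS (k+m)"])
    show "x \<in> topspace T" by (rule H1)
    show "\<forall>n. openin T (U (n+m))" using H2 by simp
    show "\<forall>k k'. k \<noteq> k' \<longrightarrow> U (k+m) \<inter> U (k'+m) = {}" by (rule dm)
    show "incseq (\<lambda>k. a (k+m))" using H4 unfolding incseq_def by simp
    show "\<forall>n. a (n+m) < \<alpha>" using H5 by simp
    show "\<forall>\<beta>. (\<forall>n. a (n+m) < \<beta>) \<longrightarrow> \<alpha> \<le> \<beta>"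
    proof (intro allI impI)
      fix \<beta> assume b: "\<forall>n. a (n+m) < \<beta>"
      have "\<forall>n. a n < \<beta>"
      proof
        fix n
        have "a n \<le> a (n+m)" using H4 unfolding incseq_def by simp
        then show "a n < \<beta>" using b le_less_trans by blast
      qed
      then show "\<alpha> \<le> \<beta>" using H6 by blast
    qed
    show "\<forall>n. scaffold T (a (n+m)) (c (n+m)) (P (n+m)) (PS (n+m))" by (rule Psc')
    show "limitin T (\<lambda>k. c (k+m)) x sequentially" by (rule limitin_sequentially_offset[OF H7])
    show "\<forall>n. T closure_of P (n+m) \<subseteq> U (n+m)"
      using closure_of_mono[OF PS] H8 by blast
    show "\<forall>n. x \<notin> T closure_of U (n+m)" using H9 by simp
    show "R m = insert x (\<Union>(range (\<lambda>k. P (k+m))))" by (rule Req)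
    show "RS m = insert (R m) (\<Union>(range (\<lambda>k. PS (k+m))))" by (rule RSeq)
  qed
  have Rle: "scaffold_le T TYPE('o) (R m) S SS" for m
  proof -
    note sfm = step_facts[OF Psc'[of m] sbm[of m] dm[of m] sbm2[of m] Req[of m] RSeq[of m]]
    show ?thesis
    proof (rule scaffold_le.intros[OF _ scS Rsc])
      show "R m \<subseteq> S" unfolding R_def H10 using PS by blast
      show "strat_minus SS S \<noteq> {} \<longrightarrow> strat_minus (RS m) (R m) \<noteq> {}"
        using sfm(1) by simp
      show "\<forall>B'\<in>strat_minus (RS m) (R m). \<forall>(\<beta>::'o) y'. scaffold T \<beta> y' B' (strat_restr (RS m) B') \<longrightarrow>
         (\<exists>B\<in>strat_minus SS S. \<exists>y. scaffold T \<beta> y B (strat_restr SS B)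
            \<and> scaffold_le T TYPE('o) B' B (strat_restr SS B))"
      proof (intro ballI allI impI)
        fix B' and \<beta> :: 'o and y'
        assume B': "B' \<in> strat_minus (RS m) (R m)" and scB: "scaffold T \<beta> y' B' (strat_restr (RS m) B')"
        obtain k where k: "B' = P (k+m)" using B' sfm(1) by auto
        have "strat_restr (RS m) B' = PS (k+m)" using sfm(2)[of k] k by simp
        then have "scaffold T \<beta> y' (P (k+m)) (PS (k+m))" using scB k by simp
        then have ab: "a (k+m) = \<beta>" using height_unique[OF Psc[of "k+m"]] by blast
        have Bin: "Sn (k+m) \<in> strat_minus SS S" using sf(1) by simp
        have rs: "strat_restr SS (Sn (k+m)) = SSn (k+m)" by (rule sf(2))
        have "scaffold T \<beta> (c (k+m)) (Sn (k+m)) (strat_restr SS (Sn (k+m)))"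
          using scs[rule_format, of "k+m"] ab rs by simp
        moreover have "scaffold_le T TYPE('o) B' (Sn (k+m)) (strat_restr SS (Sn (k+m)))"
          using Ple[of "k+m"] k rs by simp
        ultimately show "\<exists>B\<in>strat_minus SS S. \<exists>y. scaffold T \<beta> y B (strat_restr SS B)
            \<and> scaffold_le T TYPE('o) B' B (strat_restr SS B)"
          using Bin by blast
      qed
    qed
  qed
  have Rcl: "closedin T (R m)" for m
  proof -
    have Rtop: "R m \<subseteq> topspace T"
      unfolding R_def using H1 Pcl closedin_subset by blast
    have "T closure_of (R m) \<subseteq> R m"
    proof
      fix z assume z: "z \<in> T closure_of (R m)"
      show "z \<in> R m"
      proof (rule ccontr)
        assume zn: "z \<notin> R m"
        have zt: "z \<in> topspace T" using z closure_of_subset_topspace[of T "R m"] by blast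
        have zx: "z \<noteq> x" using zn unfolding R_def by blast
        have "z \<notin> \<Inter>\<U>"
        proof
          assume "z \<in> \<Inter>\<U>"
          then have "z \<in> topspace T \<inter> \<Inter>\<U>" using zt by simp
          then show False using U3 zx by simp
        qed
        then obtain V where V: "V \<in> \<U>" "z \<notin> V" by blast
        have "sh V \<in> \<H>" unfolding \<H>_def using V by blast
        then obtain N where N: "\<forall>n\<ge>N. P n \<subseteq> sh V" using key by blast
        have xs: "x \<in> sh V" using sh V by blast
        have sub: "R m \<subseteq> \<Union>((\<lambda>k. P (k+m)) ` {..<N}) \<union> sh V"
        proof
          fix w assume w: "w \<in> R m"
          show "w \<in> \<Union>((\<lambda>k. P (k+m)) ` {..<N}) \<union> sh V"
          proof (cases "w = x")
            case True then show ?thesis using xs by simp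
          next
            case False
            then obtain k where wk: "w \<in> P (k+m)" using w unfolding R_def by blast
            show ?thesis
            proof (cases "k < N")
              case True then show ?thesis using wk by blast
            next
              case False
              then have "k + m \<ge> N" by simp
              then show ?thesis using N wk by blast
            qed
          qed
        qed
        have "T closure_of (R m) \<subseteq> T closure_of (\<Union>((\<lambda>k. P (k+m)) ` {..<N}) \<union> sh V)"
          by (rule closure_of_mono[OF sub])
        also have "\<dots> = T closure_of (\<Union>((\<lambda>k. P (k+m)) ` {..<N})) \<union> T closure_of (sh V)"
          by (rule closure_of_Un)
        also have "T closure_of (\<Union>((\<lambda>k. P (k+m)) ` {..<N})) = \<Union>((closure_of) T ` ((\<lambda>k. P (k+m)) ` {..<N}))"
          by (rule closure_of_Union) simp
        also have "\<dots> = \<Union>((\<lambda>k. P (k+m)) ` {..<N})"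
          using closure_of_closedin[OF Pcl] by simp
        finally have zz: "z \<in> \<Union>((\<lambda>k. P (k+m)) ` {..<N}) \<union> T closure_of (sh V)"
          using z by blast
        have "T closure_of (sh V) \<subseteq> V" using sh V by blast
        then have "z \<in> \<Union>((\<lambda>k. P (k+m)) ` {..<N})" using zz V(2) by blast
        then obtain k where "z \<in> P (k+m)" by blast
        then have "z \<in> R m" unfolding R_def by blast
        then show False using zn by blast
      qed
    qed
    then show ?thesis using Rtop closure_of_subset_eq by blast
  qed
  have Rdec: "\<forall>m m'. m \<le> (m'::nat) \<longrightarrow> R m' \<subseteq> R m"
  proof (intro allI impI subsetI)
    fix m m' w assume mm: "m \<le> (m'::nat)" and w: "w \<in> R m'"
    show "w \<in> R m"
    proof (cases "w = x")
      case True then show ?thesis unfolding R_def by simp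
    next
      case False
      then obtain k where wk: "w \<in> P (k + m')" using w unfolding R_def by blast
      have eq: "(k + (m' - m)) + m = k + m'" using mm by simp
      have "w \<in> P ((k + (m' - m)) + m)" using wk eq by simp
      then show ?thesis unfolding R_def by blast
    qed
  qed
  have RG: "\<forall>G\<in>\<G>. \<exists>m. R m \<subseteq> G"
  proof
    fix G assume GG: "G \<in> \<G>"
    then have "G \<in> \<H>" unfolding \<H>_def by blast
    then obtain N where N: "\<forall>n\<ge>N. P n \<subseteq> G" using key by blast
    have "x \<in> G" using G GG by blast
    moreover have "P (k + N) \<subseteq> G" for k using N by simp
    ultimately have "R N \<subseteq> G" unfolding R_def by blast
    then show "\<exists>m. R m \<subseteq> G" by blast
  qed
  show "\<exists>R RS. (\<forall>m::nat. scaffold T \<alpha> x (R m) (RS m) \<and> scaffold_le T TYPE('o) (R m) S SS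
                  \<and> closedin T (R m))
          \<and> (\<forall>m m'. m \<le> m' \<longrightarrow> R m' \<subseteq> R m) \<and> (\<forall>G\<in>\<G>. \<exists>m. R m \<subseteq> G)"
    using Rsc Rle Rcl Rdec RG by blast
qed

lemma main:
  fixes T :: "'a topology" and \<alpha> :: "'o::wellorder"
  assumes reg: "regular_space T" and psi: "psi_below_b T"
    and sc: "scaffold T \<alpha> x S SS"
  shows "GOOD T TYPE('o) \<alpha> x S SS"
proof -
  obtain K :: "'a set set" where K: "card_below_b K"
    and KU: "\<forall>z\<in>topspace T. \<exists>\<U>. \<U> \<lesssim> K \<and> (\<forall>U\<in>\<U>. openin T U \<and> z \<in> U)
                          \<and> topspace T \<inter> \<Inter>\<U> = {z}"
    using psi unfolding psi_below_b_def by (elim exE conjE) (rule that)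
  have t1: "t1_space T" by (rule psi_t1[OF psi])
  show ?thesis
    using sc
  proof (induction rule: scaffold.induct)
    case (zero \<alpha> x)
    show ?case
      unfolding GOOD_def
    proof (intro allI impI)
      fix \<G> :: "'a set set"
      assume G: "card_below_b \<G> \<and> (\<forall>G\<in>\<G>. openin T G \<and> x \<in> G)"
      have sc0: "scaffold T \<alpha> x {x} {{x}}" using zero by (rule scaffold.zero)
      have sm: "strat_minus {{x}} {x} = {}" unfolding strat_minus_def by auto
      have le: "scaffold_le T TYPE('o) {x} {x} {{x}}"
        by (rule scaffold_le.intros[OF order_refl sc0 sc0]) (simp_all add: sm)
      have cl: "closedin T {x}" using t1 zero(2) by (rule closedin_t1_singleton)
      have xG: "\<forall>G\<in>\<G>. {x} \<subseteq> G" using G by blast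
      show "\<exists>R RS. (\<forall>m::nat. scaffold T \<alpha> x (R m) (RS m) \<and> scaffold_le T TYPE('o) (R m) {x} {{x}}
                  \<and> closedin T (R m))
          \<and> (\<forall>m m'. m \<le> m' \<longrightarrow> R m' \<subseteq> R m) \<and> (\<forall>G\<in>\<G>. \<exists>m. R m \<subseteq> G)"
        by (rule exI[of _ "\<lambda>m. {x}"], rule exI[of _ "\<lambda>m. {{x}}"]) (use sc0 le cl xG in simp)
    qed
  next
    case (step x U a \<alpha> c Sn SSn S SS)
    have scs: "\<forall>n. scaffold T (a n) (c n) (Sn n) (SSn n)" using step.IH by simp
    have IH: "\<forall>n. GOOD T TYPE('o) (a n) (c n) (Sn n) (SSn n)" using step.IH by simp
    show ?case
      by (rule main_step[OF reg K KU step.hyps(1) step.hyps(2) step.hyps(3) step.hyps(4)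
            step.hyps(5) step.hyps(6) scs step.hyps(7) step.hyps(8) step.hyps(9) step.hyps(10)
            step.hyps(11) IH])
  qed
qed

theorem corollary2:
  fixes Y :: "'a topology" and X :: "'a set" and \<alpha> :: "'o::wellorder"
    and x :: 'a and S :: "'a set" and SS :: "'a set set"
  assumes "regular_space Y"
    and "X \<subseteq> topspace Y"
    and "psi_below_b (subtopology Y X)"
    and "scaffold (subtopology Y X) \<alpha> x S SS"
  shows "\<exists>S'. scaffold_le (subtopology Y X) TYPE('o) S' S SS \<and> closedin (subtopology Y X) S'"
proof -
  have reg': "regular_space (subtopology Y X)" by (rule regular_space_subtopology[OF assms(1)])
  have GD: "GOOD (subtopology Y X) TYPE('o) \<alpha> x S SS" by (rule main[OF reg' assms(3) assms(4)])
  have c0: "card_below_b ({} :: 'a set set) \<and> (\<forall>G\<in>({} :: 'a set set). openin (subtopology Y X) G \<and> x \<in> G)"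
    using cbb_empty by simp
  obtain R :: "nat \<Rightarrow> 'a set" and RS where
    RR: "\<forall>m::nat. scaffold (subtopology Y X) \<alpha> x (R m) (RS m)
                  \<and> scaffold_le (subtopology Y X) TYPE('o) (R m) S SS
                  \<and> closedin (subtopology Y X) (R m)"
    using GD[unfolded GOOD_def, THEN spec, of "{}", THEN mp, OF c0]
    by (elim exE conjE) (rule that; assumption)
  show ?thesis using RR[rule_format, of 0] by blast
qed

end
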